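(* Let $W$ be the set of states $s$ from which the team has a collective strategy ensuring that $T$ is reached with probability $1$ against every opponent strategy (plays starting at $s$). Define $W_0=T$ and, for $k\ge0$, $W_{k+1}=W_k\cup\{s\in W\mid$ there is a collective selector $\bar\xi_\Pi$ at $s$ such that for every opponent action $b\in\mathsf{Av}_{\mathsf O}(s)$, $\sum_{t\in W_k}\sum_{\bar a_\Pi}\big(\prod_{p\in\Pi}\xi_p(a_p)\big)\delta(s,(\bar a_\Pi,b))(t)>0$ and $\sum_{t\in W}\sum_{\bar a_\Pi}\big(\prod_{p\in\Pi}\xi_p(a_p)\big)\delta(s,(\bar a_\Pi,b))(t)=1\}$. Then there exists $m$ with $W_m=W$.
   Context: A game structure is $G=(\Sigma,S,(A_p)_{p\in\Sigma},(\mathsf{Av}_p)_{p\in\Sigma},\delta)$ with players $\Sigma$, finite state set $S$, finite action sets $A_p$, nonempty available-action sets $\mathsf{Av}_p(s)\subseteq A_p$, and transition function $\delta$ mapping a state and an available action profile to a probability distribution on $S$. The team is $\Pi\subseteq\Sigma$, $\Sigma\setminus\Pi=\{\mathsf O\}$ (opponent), and the target set $T\subseteq S$ is absorbing. Strategies map histories ending in $s$ to distributions over $\mathsf{Av}_p(s)$; a collective strategy is a tuple of strategies for the team players, who randomise independently (joint action probabilities are products of individual ones). A collective selector at $s$ is a tuple $(\xi_p)_{p\in\Pi}$ of distributions $\xi_p$ over $\mathsf{Av}_p(s)$; $\bar a_\Pi$ ranges over $\prod_{p\in\Pi}\mathsf{Av}_p(s)$. *)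

theory Defs
  imports "HOL-Probability.Probability"
begin

text \<open>Game structure: players Pl (finite), opponent opp in Pl, team = Pl - {opp};
  states: finite type 's; actions: one ambient type 'a, available actions Av p s;
  transition delta s alpha, alpha an action profile (function on players, undefined outside Pl).\<close>

definition game_structure :: "'p set \<Rightarrow> 'p \<Rightarrow> ('p \<Rightarrow> 's \<Rightarrow> 'a set) \<Rightarrow> bool" where
  "game_structure Pl opp Av \<longleftrightarrow> finite Pl \<and> opp \<in> Pl \<and>
     (\<forall>p\<in>Pl. \<forall>s. Av p s \<noteq> {} \<and> finite (Av p s))"

definition avail_profiles :: "'p set \<Rightarrow> ('p \<Rightarrow> 's \<Rightarrow> 'a set) \<Rightarrow> 's \<Rightarrow> ('p \<Rightarrow> 'a) set" where
  "avail_profiles Pl Av s = PiE Pl (\<lambda>p. Av p s)"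

definition absorbing :: "'p set \<Rightarrow> ('p \<Rightarrow> 's \<Rightarrow> 'a set) \<Rightarrow> ('s \<Rightarrow> ('p \<Rightarrow> 'a) \<Rightarrow> 's pmf) \<Rightarrow> 's set \<Rightarrow> bool" where
  "absorbing Pl Av delta T \<longleftrightarrow>
     (\<forall>s\<in>T. \<forall>\<alpha>\<in>avail_profiles Pl Av s. set_pmf (delta s \<alpha>) \<subseteq> T)"

definition strategy :: "('p \<Rightarrow> 's \<Rightarrow> 'a set) \<Rightarrow> 'p \<Rightarrow> ('s list \<Rightarrow> 'a pmf) \<Rightarrow> bool" where
  "strategy Av p \<sigma> \<longleftrightarrow> (\<forall>h. h \<noteq> [] \<longrightarrow> set_pmf (\<sigma> h) \<subseteq> Av p (last h))"

definition collective_strategy :: "('p \<Rightarrow> 's \<Rightarrow> 'a set) \<Rightarrow> 'p set \<Rightarrow> ('p \<Rightarrow> 's list \<Rightarrow> 'a pmf) \<Rightarrow> bool" where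
  "collective_strategy Av Team \<sigma> \<longleftrightarrow> (\<forall>p\<in>Team. strategy Av p (\<sigma> p))"

definition combine :: "'p \<Rightarrow> ('p \<Rightarrow> 's list \<Rightarrow> 'a pmf) \<Rightarrow> ('s list \<Rightarrow> 'a pmf) \<Rightarrow> ('p \<Rightarrow> 's list \<Rightarrow> 'a pmf)" where
  "combine opp \<sigma> \<tau> = (\<lambda>p. if p = opp then \<tau> else \<sigma> p)"

definition next_dist :: "'p set \<Rightarrow> ('s \<Rightarrow> ('p \<Rightarrow> 'a) \<Rightarrow> 's pmf) \<Rightarrow> ('p \<Rightarrow> 's list \<Rightarrow> 'a pmf)
    \<Rightarrow> 's list \<Rightarrow> 's pmf" where
  "next_dist Pl delta \<sigma> h = bind_pmf (Pi_pmf Pl undefined (\<lambda>p. \<sigma> p h)) (\<lambda>\<alpha>. delta (last h) \<alpha>)"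

fun reach_within :: "('s list \<Rightarrow> 's pmf) \<Rightarrow> 's set \<Rightarrow> nat \<Rightarrow> 's list \<Rightarrow> real" where
  "reach_within P T 0 h = (if last h \<in> T then 1 else 0)"
| "reach_within P T (Suc n) h = (if last h \<in> T then 1
      else measure_pmf.expectation (P h) (\<lambda>t. reach_within P T n (h @ [t])))"

text \<open>Probability that the play from s under profile sigma eventually visits T
  (limit = supremum of the nondecreasing finite-horizon probabilities).\<close>
definition reach_prob :: "'p set \<Rightarrow> ('s \<Rightarrow> ('p \<Rightarrow> 'a) \<Rightarrow> 's pmf) \<Rightarrow> 's set
    \<Rightarrow> ('p \<Rightarrow> 's list \<Rightarrow> 'a pmf) \<Rightarrow> 's \<Rightarrow> real" where
  "reach_prob Pl delta T \<sigma> s = (SUP n. reach_within (next_dist Pl delta \<sigma>) T n [s])"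

definition win_set :: "'p set \<Rightarrow> 'p \<Rightarrow> ('p \<Rightarrow> 's \<Rightarrow> 'a set) \<Rightarrow> ('s \<Rightarrow> ('p \<Rightarrow> 'a) \<Rightarrow> 's pmf)
    \<Rightarrow> 's set \<Rightarrow> 's set" where
  "win_set Pl opp Av delta T = {s. \<exists>\<sigma>. collective_strategy Av (Pl - {opp}) \<sigma> \<and>
      (\<forall>\<tau>. strategy Av opp \<tau> \<longrightarrow> reach_prob Pl delta T (combine opp \<sigma> \<tau>) s = 1)}"

definition collective_selector :: "('p \<Rightarrow> 's \<Rightarrow> 'a set) \<Rightarrow> 'p set \<Rightarrow> 's \<Rightarrow> ('p \<Rightarrow> 'a pmf) \<Rightarrow> bool" where
  "collective_selector Av Team s \<xi> \<longleftrightarrow> (\<forall>p\<in>Team. set_pmf (\<xi> p) \<subseteq> Av p s)"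

definition sel_mass :: "'p set \<Rightarrow> 'p \<Rightarrow> ('p \<Rightarrow> 's \<Rightarrow> 'a set) \<Rightarrow> ('s \<Rightarrow> ('p \<Rightarrow> 'a) \<Rightarrow> 's pmf)
    \<Rightarrow> 's \<Rightarrow> ('p \<Rightarrow> 'a pmf) \<Rightarrow> 'a \<Rightarrow> 's set \<Rightarrow> real" where
  "sel_mass Pl opp Av delta s \<xi> b X =
     (\<Sum>t\<in>X. \<Sum>a\<in>PiE (Pl - {opp}) (\<lambda>p. Av p s).
        (\<Prod>p\<in>Pl - {opp}. pmf (\<xi> p) (a p)) * pmf (delta s (a(opp := b))) t)"

fun W_seq :: "'p set \<Rightarrow> 'p \<Rightarrow> ('p \<Rightarrow> 's \<Rightarrow> 'a set) \<Rightarrow> ('s \<Rightarrow> ('p \<Rightarrow> 'a) \<Rightarrow> 's pmf)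
    \<Rightarrow> 's set \<Rightarrow> nat \<Rightarrow> 's set" where
  "W_seq Pl opp Av delta T 0 = T"
| "W_seq Pl opp Av delta T (Suc k) = W_seq Pl opp Av delta T k \<union>
     {s \<in> win_set Pl opp Av delta T. \<exists>\<xi>. collective_selector Av (Pl - {opp}) s \<xi> \<and>
        (\<forall>b\<in>Av opp s. sel_mass Pl opp Av delta s \<xi> b (W_seq Pl opp Av delta T k) > 0 \<and>
                      sel_mass Pl opp Av delta s \<xi> b (win_set Pl opp Av delta T) = 1)}"

end

theory Submission
  imports Defs
begin

lemma next_dist_ret:
  fixes X :: "'s::finite set"
  assumes fin: "finite Pl" and opp: "opp \<in> Pl"
    and finAv: "\<forall>p\<in>Pl. finite (Av p s)"
    and sel: "\<forall>p\<in>Pl-{opp}. set_pmf (\<sigma> p h) \<subseteq> Av p s"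
    and s: "last h = s" and tau: "\<tau> h = return_pmf b"
  shows "measure_pmf.prob (next_dist Pl delta (combine opp \<sigma> \<tau>) h) X
       = sel_mass Pl opp Av delta s (\<lambda>p. \<sigma> p h) b X"
proof -
  let ?A = "Pl - {opp}"
  let ?M = "Pi_pmf ?A undefined (\<lambda>p. \<sigma> p h)"
  have PlI: "Pl = insert opp ?A" using opp by auto
  have "Pi_pmf Pl undefined (\<lambda>p. combine opp \<sigma> \<tau> p h)
      = Pi_pmf (insert opp ?A) undefined (\<lambda>p. combine opp \<sigma> \<tau> p h)"
    using PlI by simp
  also have "\<dots> = map_pmf (\<lambda>(y,f). f(opp:=y)) (pair_pmf (return_pmf b)
        (Pi_pmf ?A undefined (\<lambda>p. combine opp \<sigma> \<tau> p h)))"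
    using fin by (subst Pi_pmf_insert) (auto simp: combine_def tau)
  also have "Pi_pmf ?A undefined (\<lambda>p. combine opp \<sigma> \<tau> p h) = ?M"
    by (rule Pi_pmf_cong) (auto simp: combine_def)
  finally have pi: "Pi_pmf Pl undefined (\<lambda>p. combine opp \<sigma> \<tau> p h) = map_pmf (\<lambda>f. f(opp:=b)) ?M"
    by (simp add: pair_return_pmf1 map_pmf_comp fun_upd_def)
  have nd: "next_dist Pl delta (combine opp \<sigma> \<tau>) h = bind_pmf ?M (\<lambda>a. delta s (a(opp:=b)))"
    unfolding next_dist_def pi bind_map_pmf s ..
  have finA: "finite (PiE ?A (\<lambda>p. Av p s))" using fin finAv by (intro finite_PiE) auto
  have supp: "a \<in> PiE ?A (\<lambda>p. Av p s)" if "a \<in> set_pmf ?M" for a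
    using that sel fin by (auto simp: set_Pi_pmf PiE_dflt_def PiE_def extensional_def)
  have "measure_pmf.prob (next_dist Pl delta (combine opp \<sigma> \<tau>) h) X
      = (\<Sum>t\<in>X. pmf (bind_pmf ?M (\<lambda>a. delta s (a(opp:=b)))) t)"
    by (simp add: nd measure_measure_pmf_finite)
  also have "\<dots> = (\<Sum>t\<in>X. \<Sum>a\<in>PiE ?A (\<lambda>p. Av p s). pmf (delta s (a(opp:=b))) t * pmf ?M a)"
    unfolding pmf_bind
    by (intro sum.cong refl integral_measure_pmf_real finA) (use supp in auto)
  also have "\<dots> = sel_mass Pl opp Av delta s (\<lambda>p. \<sigma> p h) b X"
    unfolding sel_mass_def
    apply (intro sum.cong refl)
    apply (subst pmf_Pi')
    using fin by (auto simp: PiE_def extensional_def)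
  finally show ?thesis .
qed


lemma exp_fin:
  fixes f :: "'s::finite \<Rightarrow> real"
  shows "measure_pmf.expectation M f = (\<Sum>t\<in>UNIV. f t * pmf M t)"
  by (rule integral_measure_pmf_real) auto

lemma rw_bounds: "0 \<le> reach_within P T n h \<and> reach_within P T n h \<le> (1::real)"
  for P :: "'s::finite list \<Rightarrow> 's pmf"
proof (induction n arbitrary: h)
  case 0 then show ?case by simp
next
  case (Suc n)
  have "(\<Sum>t\<in>UNIV. reach_within P T n (h @ [t]) * pmf (P h) t) \<le> (\<Sum>t\<in>UNIV. pmf (P h) t)"
    by (intro sum_mono) (use Suc pmf_nonneg in \<open>auto intro: mult_left_le_one_le\<close>)
  also have "\<dots> = 1" by (rule sum_pmf_eq_1) auto
  finally have le: "(\<Sum>t\<in>UNIV. reach_within P T n (h @ [t]) * pmf (P h) t) \<le> 1" .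
  have ge: "0 \<le> (\<Sum>t\<in>UNIV. reach_within P T n (h @ [t]) * pmf (P h) t)"
    by (intro sum_nonneg) (use Suc in auto)
  show ?case using le ge by (simp add: exp_fin)
qed

lemma rw_mono_Suc: "reach_within P T n h \<le> reach_within P T (Suc n) h"
  for P :: "'s::finite list \<Rightarrow> 's pmf"
proof (induction n arbitrary: h)
  case 0 then show ?case using rw_bounds[of P T 0] by (auto simp: exp_fin intro!: sum_nonneg)
next
  case (Suc n)
  show ?case
  proof (cases "last h \<in> T")
    case True then show ?thesis by simp
  next
    case False
    have "(\<Sum>t\<in>UNIV. reach_within P T n (h @ [t]) * pmf (P h) t) \<le> (\<Sum>t\<in>UNIV. reach_within P T (Suc n) (h @ [t]) * pmf (P h) t)"
      by (intro sum_mono mult_right_mono Suc.IH) auto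
    then show ?thesis using False by (simp only: reach_within.simps(2) exp_fin if_False)
  qed
qed

lemma rw_mono: "n \<le> n' \<Longrightarrow> reach_within P T n h \<le> reach_within P T n' h"
  for P :: "'s::finite list \<Rightarrow> 's pmf"
proof (induction n' rule: dec_induct)
  case base then show ?case by simp
next
  case (step k) then show ?case using rw_mono_Suc[of P T k h] by linarith
qed

lemma rw_step:
  fixes P :: "'s::finite list \<Rightarrow> 's pmf"
  assumes "last h \<notin> T"
  shows "reach_within P T (Suc n) h \<le> 1 - pmf (P h) t + pmf (P h) t * reach_within P T n (h @ [t])"
proof -
  let ?f = "\<lambda>u. reach_within P T n (h @ [u]) * pmf (P h) u"
  have "(\<Sum>u\<in>UNIV. ?f u) = ?f t + (\<Sum>u\<in>UNIV - {t}. ?f u)"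
    by (subst sum.remove[of _ t]) auto
  also have "(\<Sum>u\<in>UNIV - {t}. ?f u) \<le> (\<Sum>u\<in>UNIV - {t}. pmf (P h) u)"
  proof (intro sum_mono)
    fix u show "?f u \<le> pmf (P h) u"
      using rw_bounds[of P T n "h @ [u]"] pmf_nonneg[of "P h" u] by (intro mult_left_le_one_le) auto
  qed
  also have "(\<Sum>u\<in>UNIV - {t}. pmf (P h) u) = 1 - pmf (P h) t"
    using sum_pmf_eq_1[of UNIV "P h"] by (subst sum_diff1) auto
  finally show ?thesis using assms by (simp add: exp_fin mult.commute)
qed

fun hp :: "('s list \<Rightarrow> 's pmf) \<Rightarrow> 's list \<Rightarrow> 's list \<Rightarrow> real" where
  "hp P h [] = 1"
| "hp P h (t # e) = pmf (P h) t * hp P (h @ [t]) e"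

lemma rw_path:
  fixes P :: "'s::finite list \<Rightarrow> 's pmf"
  assumes "ext \<noteq> [] \<longrightarrow> last h \<notin> T" "\<forall>x\<in>set (butlast ext). x \<notin> T"
  shows "reach_within P T (n + length ext) h \<le> 1 - hp P h ext + hp P h ext * reach_within P T n (h @ ext)"
  using assms
proof (induction ext arbitrary: h)
  case Nil then show ?case by simp
next
  case (Cons t e)
  have IH: "reach_within P T (n + length e) (h @ [t]) \<le> 1 - hp P (h @ [t]) e + hp P (h @ [t]) e * reach_within P T n (h @ [t] @ e)"
    using Cons.IH[of "h @ [t]"] Cons.prems by (cases e) auto
  have st: "reach_within P T (Suc (n + length e)) h \<le> 1 - pmf (P h) t + pmf (P h) t * reach_within P T (n + length e) (h @ [t])"
    using Cons.prems by (intro rw_step) auto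
  have "pmf (P h) t * reach_within P T (n + length e) (h @ [t]) \<le> pmf (P h) t * (1 - hp P (h @ [t]) e + hp P (h @ [t]) e * reach_within P T n (h @ [t] @ e))"
    by (intro mult_left_mono IH) auto
  with st show ?case by (simp add: algebra_simps)
qed

lemma rw_shift:
  assumes "\<And>rest. P (h1 @ t # rest) = P' (t # rest)"
  shows "reach_within P T n (h1 @ t # rest) = reach_within P' T n (t # rest)"
proof (induction n arbitrary: rest)
  case 0 then show ?case by simp
next
  case (Suc n)
  have "\<And>u. reach_within P T n (h1 @ t # rest @ [u]) = reach_within P' T n (t # rest @ [u])"
    using Suc by blast
  then show ?case using assms by simp
qed

lemma hp_cong:
  assumes "\<forall>i<length ext. P (h @ take i ext) = P' (h @ take i ext)"
  shows "hp P h ext = hp P' h ext"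
  using assms
proof (induction ext arbitrary: h)
  case Nil then show ?case by simp
next
  case (Cons t e)
  have "P h = P' h" using Cons.prems[rule_format, of 0] by simp
  moreover have "hp P (h @ [t]) e = hp P' (h @ [t]) e"
  proof (intro Cons.IH allI impI)
    fix i assume "i < length e"
    then show "P ((h @ [t]) @ take i e) = P' ((h @ [t]) @ take i e)"
      using Cons.prems[rule_format, of "Suc i"] by simp
  qed
  ultimately show ?case by simp
qed

definition good where
  "good P U W h ext \<longleftrightarrow> ext \<noteq> [] \<and> hp P h ext > 0 \<and> last h \<in> U \<and>
     (\<forall>x\<in>set (butlast ext). x \<in> U) \<and> last ext \<notin> W"

lemma no_good_zero:
  fixes P :: "'s::finite list \<Rightarrow> 's pmf"
  assumes UT: "U \<inter> T = {}" and UW: "U \<subseteq> W" and UWm: "U \<inter> Wm = {}" and WU: "W - Wm \<subseteq> U"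
    and Pprop: "\<And>h. h \<noteq> [] \<Longrightarrow> last h \<in> U \<Longrightarrow> measure_pmf.prob (P h) Wm = 0 \<or> measure_pmf.prob (P h) W \<noteq> 1"
  shows "h \<noteq> [] \<Longrightarrow> last h \<in> U \<Longrightarrow> \<not> (\<exists>ext. good P U W h ext) \<Longrightarrow> reach_within P T n h = 0"
proof (induction n arbitrary: h)
  case 0 then show ?case using UT by auto
next
  case (Suc n)
  have hT: "last h \<notin> T" using Suc.prems UT by auto
  have single: "pmf (P h) u = 0" if "u \<notin> W" for u
  proof (rule ccontr)
    assume "pmf (P h) u \<noteq> 0"
    then have "good P U W h [u]" using Suc.prems that pmf_nonneg[of "P h" u]
      by (auto simp: good_def)
    then show False using Suc.prems by blast
  qed
  have mW: "measure_pmf.prob (P h) W = 1"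
  proof -
    have "measure_pmf.prob (P h) (UNIV - W) = (\<Sum>u\<in>UNIV - W. pmf (P h) u)"
      by (rule measure_measure_pmf_finite) auto
    also have "\<dots> = 0" using single by auto
    finally show ?thesis using measure_pmf.prob_compl[of "W" "P h"] by simp
  qed
  then have mWm: "measure_pmf.prob (P h) Wm = 0" using Pprop[of h] Suc.prems by auto
  have term0: "reach_within P T n (h @ [t]) * pmf (P h) t = 0" for t
  proof (cases "pmf (P h) t = 0")
    case True then show ?thesis by simp
  next
    case False
    then have pos: "pmf (P h) t > 0" using pmf_nonneg[of "P h" t] by linarith
    have "t \<in> W" using single False by blast
    moreover have "t \<notin> Wm"
    proof
      assume "t \<in> Wm"
      then have "pmf (P h) t \<le> measure_pmf.prob (P h) Wm"
        using measure_pmf.finite_measure_mono[of "{t}" Wm "P h"] by (simp add: measure_pmf_single)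
      then show False using mWm pos by simp
    qed
    ultimately have tU: "t \<in> U" using WU by auto
    have "\<not> (\<exists>e. good P U W (h @ [t]) e)"
    proof
      assume "\<exists>e. good P U W (h @ [t]) e"
      then obtain e where g: "good P U W (h @ [t]) e" by blast
      have "good P U W h (t # e)"
        using g pos Suc.prems tU by (cases e) (auto simp: good_def)
      then show False using Suc.prems by blast
    qed
    then have "reach_within P T n (h @ [t]) = 0" using Suc.IH[of "h @ [t]"] tU by simp
    then show ?thesis by simp
  qed
  have "(\<Sum>t\<in>UNIV. reach_within P T n (h @ [t]) * pmf (P h) t) = 0"
    by (rule sum.neutral) (use term0 in blast)
  then show ?case using hT by (simp add: exp_fin)
qed


lemma reach_prob_le1: "reach_prob Pl delta T \<sigma> (s::'s::finite) \<le> 1"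
  unfolding reach_prob_def using rw_bounds by (intro cSUP_least) auto

lemma rw_le_reach_prob: "reach_within (next_dist Pl delta \<sigma>) T n [s::'s::finite] \<le> reach_prob Pl delta T \<sigma> s"
  unfolding reach_prob_def using rw_bounds
  by (intro cSUP_upper) (auto intro!: bdd_aboveI[of _ 1])

lemma T_sub_W:
  fixes Av :: "'p \<Rightarrow> 's::finite \<Rightarrow> 'a set"
  assumes gs: "game_structure Pl opp Av"
  shows "T \<subseteq> win_set Pl opp Av delta T"
proof
  fix s assume sT: "s \<in> T"
  define \<sigma> :: "'p \<Rightarrow> 's list \<Rightarrow> 'a pmf" where "\<sigma> = (\<lambda>p h. return_pmf (SOME a. a \<in> Av p (last h)))"
  have "collective_strategy Av (Pl - {opp}) \<sigma>"
    unfolding collective_strategy_def strategy_def \<sigma>_def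
    using gs unfolding game_structure_def by (auto intro!: someI_ex[of "\<lambda>a. a \<in> Av _ _"])
  moreover have "reach_prob Pl delta T (combine opp \<sigma> \<tau>) s = 1" for \<tau>
  proof -
    have "\<And>n. reach_within (next_dist Pl delta (combine opp \<sigma> \<tau>)) T n [s] = 1"
      using sT by (case_tac n) auto
    then show ?thesis unfolding reach_prob_def by simp
  qed
  ultimately show "s \<in> win_set Pl opp Av delta T" unfolding win_set_def by blast
qed

lemma Wseq_sub_W:
  fixes Av :: "'p \<Rightarrow> 's::finite \<Rightarrow> 'a set"
  assumes gs: "game_structure Pl opp Av"
  shows "W_seq Pl opp Av delta T k \<subseteq> win_set Pl opp Av delta T"
  using T_sub_W[OF gs] by (induction k) auto

lemma Wseq_mono: "i \<le> j \<Longrightarrow> W_seq Pl opp Av delta T i \<subseteq> W_seq Pl opp Av delta T j"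
  by (induction j rule: dec_induct) auto

lemma Wseq_stab:
  fixes Av :: "'p \<Rightarrow> 's::finite \<Rightarrow> 'a set"
  shows "\<exists>m. W_seq Pl opp Av delta T (Suc m) = W_seq Pl opp Av delta T m"
proof (rule ccontr)
  assume "\<not> ?thesis"
  then have ps: "W_seq Pl opp Av delta T m \<subset> W_seq Pl opp Av delta T (Suc m)" for m by auto
  have "m \<le> card (W_seq Pl opp Av delta T m)" for m
  proof (induction m)
    case (Suc m)
    have "card (W_seq Pl opp Av delta T m) < card (W_seq Pl opp Av delta T (Suc m))"
      by (rule psubset_card_mono[OF _ ps]) auto
    with Suc show ?case by linarith
  qed simp
  moreover have "card (W_seq Pl opp Av delta T m) \<le> card (UNIV :: 's set)" for m
    by (rule card_mono) auto
  ultimately show False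
    using order_trans[of "Suc (card (UNIV :: 's set))"] by (metis not_less_eq_eq)
qed


theorem lemma8:
  fixes Pl :: "'p set" and opp :: 'p and Av :: "'p \<Rightarrow> 's::finite \<Rightarrow> 'a set"
    and delta :: "'s \<Rightarrow> ('p \<Rightarrow> 'a) \<Rightarrow> 's pmf" and T :: "'s set"
  assumes "game_structure Pl opp Av"
    and "absorbing Pl Av delta T"
  shows "\<exists>m. W_seq Pl opp Av delta T m = win_set Pl opp Av delta T"
proof -
  note gs = assms(1)
  have fin: "finite Pl" and oppPl: "opp \<in> Pl" and AvP: "\<And>p s. p \<in> Pl \<Longrightarrow> Av p s \<noteq> {} \<and> finite (Av p s)"
    using gs unfolding game_structure_def by auto
  define W where "W = win_set Pl opp Av delta T"
  obtain m where stab: "W_seq Pl opp Av delta T (Suc m) = W_seq Pl opp Av delta T m"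
    using Wseq_stab[of Pl opp Av delta T] by blast
  define Wm where "Wm = W_seq Pl opp Av delta T m"
  have WmW: "Wm \<subseteq> W" unfolding Wm_def W_def by (rule Wseq_sub_W[OF gs])
  have TWm: "T \<subseteq> Wm" unfolding Wm_def using Wseq_mono[of 0 m] by simp
  have "W \<subseteq> Wm"
  proof
    fix s assume sW: "s \<in> W"
    show "s \<in> Wm"
    proof (rule ccontr)
      assume sWm: "s \<notin> Wm"
      define U where "U = W - Wm"
      have sU: "s \<in> U" using sW sWm U_def by auto
      have UT: "U \<inter> T = {}" using TWm U_def by auto
      obtain \<sigma> where cs: "collective_strategy Av (Pl - {opp}) \<sigma>"
        and win: "\<And>\<tau>. strategy Av opp \<tau> \<Longrightarrow> reach_prob Pl delta T (combine opp \<sigma> \<tau>) s = 1"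
        using sW unfolding W_def win_set_def by blast
      have notin: "\<exists>b\<in>Av opp x. \<not> (sel_mass Pl opp Av delta x \<xi> b Wm > 0 \<and> sel_mass Pl opp Av delta x \<xi> b W = 1)"
        if "x \<in> U" "collective_selector Av (Pl - {opp}) x \<xi>" for x \<xi>
      proof -
        have xW: "x \<in> W" and xWm: "x \<notin> Wm" using that(1) unfolding U_def by auto
        have "x \<notin> W_seq Pl opp Av delta T (Suc m)" using xWm stab unfolding Wm_def by simp
        then have "\<not> (\<exists>\<xi>. collective_selector Av (Pl - {opp}) x \<xi> \<and>
            (\<forall>b\<in>Av opp x. sel_mass Pl opp Av delta x \<xi> b Wm > 0 \<and> sel_mass Pl opp Av delta x \<xi> b W = 1))"
          using xW unfolding W_seq.simps(2) Wm_def[symmetric] W_def[symmetric] by blast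
        then show ?thesis using that(2) by blast
      qed
      define Q where "Q = (\<lambda>h b. b \<in> Av opp (last h) \<and> (h \<noteq> [] \<and> last h \<in> U \<longrightarrow>
          \<not> (sel_mass Pl opp Av delta (last h) (\<lambda>p. \<sigma> p h) b Wm > 0 \<and>
             sel_mass Pl opp Av delta (last h) (\<lambda>p. \<sigma> p h) b W = 1)))"
      define bf where "bf = (\<lambda>h. SOME b. Q h b)"
      have bfQ: "Q h (bf h)" for h
      proof -
        have "\<exists>b. Q h b"
        proof (cases "h \<noteq> [] \<and> last h \<in> U")
          case True
          have "collective_selector Av (Pl - {opp}) (last h) (\<lambda>p. \<sigma> p h)"
            using cs True unfolding collective_selector_def collective_strategy_def strategy_def by auto
          then show ?thesis using notin[of "last h"] True unfolding Q_def by blast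
        next
          case False
          then show ?thesis using AvP[OF oppPl, of "last h"] unfolding Q_def by auto
        qed
        then show ?thesis unfolding bf_def by (rule someI_ex)
      qed
      define \<tau>0 where "\<tau>0 = (\<lambda>h. return_pmf (bf h) :: 'a pmf)"
      have st0: "strategy Av opp \<tau>0" using bfQ unfolding strategy_def \<tau>0_def Q_def by auto
      define P0 where "P0 = next_dist Pl delta (combine opp \<sigma> \<tau>0)"
      have selh: "\<forall>p\<in>Pl-{opp}. set_pmf (\<sigma> p h) \<subseteq> Av p (last h)" if "h \<noteq> []" for h
        using cs that unfolding collective_strategy_def strategy_def by auto
      have P0prop: "measure_pmf.prob (P0 h) Wm = 0 \<or> measure_pmf.prob (P0 h) W \<noteq> 1"
        if "h \<noteq> []" "last h \<in> U" for h
      proof -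
        have eq: "measure_pmf.prob (P0 h) X = sel_mass Pl opp Av delta (last h) (\<lambda>p. \<sigma> p h) (bf h) X" for X
          unfolding P0_def
          by (rule next_dist_ret[OF fin oppPl]) (use AvP selh[OF that(1)] in \<open>auto simp: \<tau>0_def\<close>)
        have "\<not> (sel_mass Pl opp Av delta (last h) (\<lambda>p. \<sigma> p h) (bf h) Wm > 0 \<and>
             sel_mass Pl opp Av delta (last h) (\<lambda>p. \<sigma> p h) (bf h) W = 1)"
          using bfQ[of h] that unfolding Q_def by auto
        then show ?thesis using eq[of Wm] eq[of W] measure_nonneg[of "measure_pmf (P0 h)" Wm] by auto
      qed
      have "\<exists>ext. good P0 U W [s] ext"
      proof (rule ccontr)
        assume ng: "\<not> (\<exists>ext. good P0 U W [s] ext)"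
        have "reach_within P0 T n [s] = 0" for n
          by (rule no_good_zero[where Wm=Wm and W=W and U=U]) (use UT P0prop ng sU in \<open>auto simp: U_def\<close>)
        then have "reach_prob Pl delta T (combine opp \<sigma> \<tau>0) s = 0"
          unfolding reach_prob_def P0_def[symmetric] by simp
        then show False using win[OF st0] by simp
      qed
      then obtain ext where g: "good P0 U W [s] ext" by blast
      have extne: "ext \<noteq> []" and qpos: "hp P0 [s] ext > 0" and bU: "\<forall>x\<in>set (butlast ext). x \<in> U"
        and tW: "last ext \<notin> W" using g unfolding good_def by auto
      define t' where "t' = last ext"
      define h1 where "h1 = s # butlast ext"
      define h0 where "h0 = s # ext"
      have h0eq: "h0 = h1 @ [t']" unfolding h0_def h1_def t'_def using extne by simp
      define \<sigma>' where "\<sigma>' = (\<lambda>p h'. \<sigma> p (h1 @ h'))"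
      have cs': "collective_strategy Av (Pl - {opp}) \<sigma>'"
        unfolding collective_strategy_def strategy_def \<sigma>'_def
      proof (intro ballI allI impI)
        fix p and h :: "'s list" assume a: "p \<in> Pl - {opp}" "h \<noteq> []"
        show "set_pmf (\<sigma> p (h1 @ h)) \<subseteq> Av p (last h)"
        proof -
          have "last (h1 @ h) = last h" using a by simp
          moreover have "h1 @ h \<noteq> []" by (simp add: h1_def)
          ultimately show ?thesis using cs a unfolding collective_strategy_def strategy_def by metis
        qed
      qed
      have "t' \<notin> W" using tW t'_def by simp
      then obtain \<tau>' where st': "strategy Av opp \<tau>'"
        and lose: "reach_prob Pl delta T (combine opp \<sigma>' \<tau>') t' \<noteq> 1"
        using cs' unfolding W_def win_set_def by blast
      define c where "c = reach_prob Pl delta T (combine opp \<sigma>' \<tau>') t'"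
      have c1: "c < 1" using lose reach_prob_le1 unfolding c_def by (metis order_le_less)
      define \<tau> where "\<tau> = (\<lambda>h. if take (length h0) h = h0 then \<tau>' (t' # drop (length h0) h) else \<tau>0 h)"
      have st: "strategy Av opp \<tau>"
        unfolding strategy_def
      proof (intro allI impI)
        fix h :: "'s list" assume hne: "h \<noteq> []"
        show "set_pmf (\<tau> h) \<subseteq> Av opp (last h)"
        proof (cases "take (length h0) h = h0")
          case True
          define r where "r = drop (length h0) h"
          have hr: "h = h0 @ r" unfolding r_def using True append_take_drop_id[of "length h0" h] by simp
          have "last h = last (t' # r)" unfolding hr h0eq by simp
          moreover have "\<tau> h = \<tau>' (t' # r)" unfolding \<tau>_def r_def using True by simp
          moreover have "set_pmf (\<tau>' (t' # r)) \<subseteq> Av opp (last (t' # r))"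
            using st' unfolding strategy_def by blast
          ultimately show ?thesis by simp
        next
          case False
          then have "\<tau> h = \<tau>0 h" unfolding \<tau>_def by simp
          then show ?thesis using st0 hne unfolding strategy_def by simp
        qed
      qed
      define P where "P = next_dist Pl delta (combine opp \<sigma> \<tau>)"
      define P' where "P' = next_dist Pl delta (combine opp \<sigma>' \<tau>')"
      have shift: "P (h1 @ t' # rest) = P' (t' # rest)" for rest
      proof -
        have e: "h1 @ t' # rest = h0 @ rest" using h0eq by simp
        have "(\<lambda>p. combine opp \<sigma> \<tau> p (h1 @ t' # rest)) = (\<lambda>p. combine opp \<sigma>' \<tau>' p (t' # rest))"
          unfolding combine_def \<sigma>'_def \<tau>_def by (rule ext) (simp add: h0eq)
        moreover have "last (h1 @ t' # rest) = last (t' # rest)" by simp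
        ultimately show ?thesis unfolding P_def P'_def next_dist_def by (simp only:)
      qed
      have hpeq: "hp P [s] ext = hp P0 [s] ext"
      proof (rule hp_cong, intro allI impI)
        fix i assume i: "i < length ext"
        have "length (take (length h0) ([s] @ take i ext)) < length h0"
          using i unfolding h0_def by simp
        then have "take (length h0) ([s] @ take i ext) \<noteq> h0" by auto
        then have "\<tau> ([s] @ take i ext) = \<tau>0 ([s] @ take i ext)" unfolding \<tau>_def by simp
        then have "(\<lambda>p. combine opp \<sigma> \<tau> p ([s] @ take i ext)) = (\<lambda>p. combine opp \<sigma> \<tau>0 p ([s] @ take i ext))"
          unfolding combine_def by auto
        then show "P ([s] @ take i ext) = P0 ([s] @ take i ext)"
          unfolding P_def P0_def next_dist_def by (simp only:)
      qed
      have bnd: "reach_within P T N [s] \<le> 1 - hp P0 [s] ext + hp P0 [s] ext * c" for N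
      proof -
        have "reach_within P T N [s] \<le> reach_within P T (N + length ext) [s]" by (rule rw_mono) simp
        also have "\<dots> \<le> 1 - hp P [s] ext + hp P [s] ext * reach_within P T N ([s] @ ext)"
          by (rule rw_path) (use sU UT bU in auto)
        also have "reach_within P T N ([s] @ ext) = reach_within P' T N [t']"
          using rw_shift[of P h1 t' P' T N "[]", OF shift] h0eq unfolding h0_def by simp
        also have "\<dots> \<le> c" unfolding c_def P'_def by (rule rw_le_reach_prob)
        finally show ?thesis using hpeq qpos by (simp add: mult_left_mono)
      qed
      have "reach_prob Pl delta T (combine opp \<sigma> \<tau>) s \<le> 1 - hp P0 [s] ext + hp P0 [s] ext * c"
        unfolding reach_prob_def P_def[symmetric] using bnd by (intro cSUP_least) auto
      also have "\<dots> < 1" using qpos c1 by (simp add: mult_less_cancel_left)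
      finally show False using win[OF st] by simp
    qed
  qed
  then have "W_seq Pl opp Av delta T m = win_set Pl opp Av delta T"
    using WmW unfolding Wm_def W_def by auto
  then show ?thesis by blast
qed

end
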